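(* It holds that $$\mathrm{cl}\,\mathrm{conv}(P^B\setminus C)=\mathrm{cl}\,\mathrm{conv}\big(P^B\setminus T^{P^B\cap C}\big),$$ where $T^{P^B\cap C}=\{\bar x\}+\mathrm{conv}\big(\bigcup_{j\in N_1\cup N_2}\{\lambda\bar r^j:\alpha_j<\lambda<\beta_j\}\big)+\mathrm{recc}(P^B\cap C)$.
   Context: Let $A\in\mathbb{R}^{m\times n}$ have full row rank, $b\in\mathbb{R}^m$, and $P=\{x\in\mathbb{R}^n_+:Ax=b\}$. Let $C\subseteq\mathbb{R}^n$ be an open convex set. Fix a basis $B$ of $P$ with nonbasic set $N=\{1,\dots,n\}\setminus B$. Write $P=\{x:x_i=\bar b_i-\sum_{j\in N}\bar a_{ij}x_j\ (i\in B),\ x\ge0\}$ with $\bar b\ge0$. The basic solution $\bar x$ has $\bar x_i=\bar b_i$ ($i\in B$) and $0$ ($i\in N$). $P^B$ is obtained by dropping $x_i\ge0$ for $i\in B$. For $j\in N$, $\bar r^j$ has $\bar r^j_k=-\bar a_{kj}$ ($k\in B$), $\bar r^j_j=1$, and $0$ otherwise. Thus $P^B=\{\bar x+\sum_{j\in N}x_j\bar r^j:x_j\ge0\}$. It is assumed that $\bar x\notin\mathrm{cl}(C)$. For $j\in N$, $\alpha_j=\inf\{\lambda\ge0:\bar x+\lambda\bar r^j\in C\}$ and $\beta_j=\sup\{\lambda\ge0:\bar x+\lambda\bar r^j\in C\}$, with $\alpha_j=+\infty$, $\beta_j=-\infty$ if the halfline misses $C$. These values are unchanged if $C$ is replaced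 by $P^B\cap C$. Define - $N_1=\{j:\alpha_j\in(0,\infty),\beta_j=+\infty\}$; - $N_2=\{j:\alpha_j\in(0,\infty),\beta_j\in(\alpha_j,\infty)\}$. For a set $K$, $\mathrm{recc}(K)=\{d:x+\lambda d\in K\ \forall x\in K,\lambda\ge0\}$. Here $\mathrm{cl}\,\mathrm{conv}$ is the closure of the convex hull. *)

theory Defs
  imports "HOL-Analysis.Analysis"
begin

definition recc :: "'a::real_vector set \<Rightarrow> 'a set" where
  "recc K = {d. \<forall>x\<in>K. \<forall>t::real. t \<ge> 0 \<longrightarrow> x + t *\<^sub>R d \<in> K}"

text \<open>alpha: inf of the step lengths lambda >= 0 with xbar + lambda r in C (+infinity if none);
  beta: sup of them (-infinity if none).\<close>
definition alpha_step :: "'a::real_vector set \<Rightarrow> 'a \<Rightarrow> 'a \<Rightarrow> ereal" where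
  "alpha_step C xb r = Inf (ereal ` {t::real. t \<ge> 0 \<and> xb + t *\<^sub>R r \<in> C})"

definition beta_step :: "'a::real_vector set \<Rightarrow> 'a \<Rightarrow> 'a \<Rightarrow> ereal" where
  "beta_step C xb r = Sup (ereal ` {t::real. t \<ge> 0 \<and> xb + t *\<^sub>R r \<in> C})"

text \<open>P^B: the polyhedron P with the nonnegativity constraints of the basic variables dropped.\<close>
definition PB :: "real^'n^'m \<Rightarrow> real^'m \<Rightarrow> 'n set \<Rightarrow> (real^'n) set" where
  "PB A b B = {x. A *v x = b \<and> (\<forall>j. j \<notin> B \<longrightarrow> 0 \<le> x $ j)}"

end

theory Submission
  imports Defs
begin

lemma mv_sum: "(A::real^'n^'m) *v (\<Sum>j\<in>S. f j) = (\<Sum>j\<in>S. A *v f j)"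
  using linear_sum[OF matrix_vector_mul_linear, of A f S] by (simp add: o_def)

lemma ray_sum_comp:
  fixes r :: "'n \<Rightarrow> real^'n"
  assumes r_ray: "\<forall>j. j \<notin> B \<longrightarrow> A *v r j = 0 \<and> r j $ j = 1
                   \<and> (\<forall>k. k \<notin> B \<and> k \<noteq> j \<longrightarrow> r j $ k = 0)"
    and k: "k \<notin> B"
  shows "(\<Sum>j\<in>{j. j \<notin> B}. c j *\<^sub>R r j) $ k = c k"
proof -
  have "(\<Sum>j\<in>{j. j \<notin> B}. c j *\<^sub>R r j) $ k = (\<Sum>j\<in>{j. j \<notin> B}. c j * (r j $ k))"
    by (simp add: sum_component)
  also have "\<dots> = (\<Sum>j\<in>{j. j \<notin> B}. if j = k then c j else 0)"
    by (rule sum.cong) (use r_ray k in auto)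
  also have "\<dots> = c k" using k by (simp add: sum.delta)
  finally show ?thesis .
qed

lemma ray_sum_A:
  fixes r :: "'n \<Rightarrow> real^'n" and A :: "real^'n^'m"
  assumes r_ray: "\<forall>j. j \<notin> B \<longrightarrow> A *v r j = 0 \<and> r j $ j = 1
                   \<and> (\<forall>k. k \<notin> B \<and> k \<noteq> j \<longrightarrow> r j $ k = 0)"
  shows "A *v (\<Sum>j\<in>{j. j \<notin> B}. c j *\<^sub>R r j) = 0"
  using r_ray by (simp add: mv_sum matrix_vector_mult_scaleR)

lemma PB_add:
  fixes r :: "'n \<Rightarrow> real^'n" and A :: "real^'n^'m"
  assumes r_ray: "\<forall>j. j \<notin> B \<longrightarrow> A *v r j = 0 \<and> r j $ j = 1
                   \<and> (\<forall>k. k \<notin> B \<and> k \<noteq> j \<longrightarrow> r j $ k = 0)"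
    and p: "p \<in> PB A b B" and c: "\<And>j. j \<notin> B \<Longrightarrow> 0 \<le> c j"
  shows "p + (\<Sum>j\<in>{j. j \<notin> B}. c j *\<^sub>R r j) \<in> PB A b B"
  using p c ray_sum_A[OF r_ray] ray_sum_comp[OF r_ray]
  by (simp add: PB_def matrix_vector_right_distrib)

lemma PB_rep:
  fixes r :: "'n \<Rightarrow> real^'n" and A :: "real^'n^'m"
  assumes r_ray: "\<forall>j. j \<notin> B \<longrightarrow> A *v r j = 0 \<and> r j $ j = 1
                   \<and> (\<forall>k. k \<notin> B \<and> k \<noteq> j \<longrightarrow> r j $ k = 0)"
    and B_indep: "\<And>c. (\<Sum>j\<in>B. c j *\<^sub>R column j A) = 0 \<Longrightarrow> \<forall>j\<in>B. c j = 0"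
    and xbar_eq: "A *v xbar = b" and xbar_nonbasic: "\<forall>j. j \<notin> B \<longrightarrow> xbar $ j = 0"
    and x: "x \<in> PB A b B"
  shows "x = xbar + (\<Sum>j\<in>{j. j \<notin> B}. (x $ j) *\<^sub>R r j)"
proof -
  define v where "v = x - xbar - (\<Sum>j\<in>{j. j \<notin> B}. (x $ j) *\<^sub>R r j)"
  have Av: "A *v v = 0" using x xbar_eq ray_sum_A[OF r_ray]
    by (simp add: v_def PB_def matrix_vector_mult_diff_distrib)
  have vN: "v $ k = 0" if "k \<notin> B" for k
    using that xbar_nonbasic ray_sum_comp[OF r_ray that] by (simp add: v_def)
  have "A *v v = (\<Sum>i\<in>UNIV. v $ i *s column i A)" by (rule matrix_mult_sum)
  also have "\<dots> = (\<Sum>i\<in>UNIV. v $ i *\<^sub>R column i A)"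
    by (simp add: scalar_mult_eq_scaleR)
  also have "\<dots> = (\<Sum>i\<in>B. v $ i *\<^sub>R column i A)"
    by (rule sum.mono_neutral_right) (auto simp: vN)
  finally have "(\<Sum>i\<in>B. v $ i *\<^sub>R column i A) = 0" using Av by simp
  from B_indep[OF this] vN have "\<And>k. v $ k = 0" by blast
  then have "v = 0" by (simp add: vec_eq_iff)
  then show ?thesis by (simp add: v_def algebra_simps)
qed
lemma open_recc:
  fixes C :: "'a::real_normed_vector set"
  assumes "open C" "convex C" "p \<in> C" "\<And>t. t \<ge> 0 \<Longrightarrow> p + t *\<^sub>R d \<in> C" "q \<in> C" "t \<ge> 0"
  shows "q + t *\<^sub>R d \<in> C"
proof -
  obtain e where e: "e > 0" "ball q e \<subseteq> C" using assms(1,5) open_contains_ball by blast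
  define u where "u = e / (2 * (norm (q - p) + 1))"
  have u: "u > 0" using e unfolding u_def by (intro divide_pos_pos) (auto intro: add_nonneg_pos)
  have "norm (u *\<^sub>R (q - p)) = u * norm (q - p)" using u by simp
  also have "\<dots> < e"
  proof -
    have "u * norm (q - p) \<le> u * (norm (q - p) + 1)" using u by simp
    also have "\<dots> = e / 2"
    proof -
      have "norm (q - p) + 1 > 0" by (simp add: add_nonneg_pos)
      then show ?thesis unfolding u_def by (simp add: field_simps)
    qed
    finally show ?thesis using e by simp
  qed
  finally have q1: "q + u *\<^sub>R (q - p) \<in> C" using e by (auto simp: dist_norm)
  have p1: "p + (t * (1 + u) / u) *\<^sub>R d \<in> C" using assms(4,6) u by simp
  have "(1 / (1 + u)) *\<^sub>R (q + u *\<^sub>R (q - p)) + (u / (1 + u)) *\<^sub>R (p + (t * (1 + u) / u) *\<^sub>R d) \<in> C"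
    using convexD[OF assms(2) q1 p1, of "1/(1+u)" "u/(1+u)"] u by (simp add: add_divide_distrib[symmetric])
  also have "(1 / (1 + u)) *\<^sub>R (q + u *\<^sub>R (q - p)) + (u / (1 + u)) *\<^sub>R (p + (t * (1 + u) / u) *\<^sub>R d)
     = q + t *\<^sub>R d"
  proof -
    have h1: "1 / (1 + u) + u / (1 + u) = 1" using u by (simp add: add_divide_distrib[symmetric])
    have h2: "(u / (1 + u)) * (t * (1 + u) / u) = t" using u by simp
    have h3: "(1 / (1 + u)) * u - u / (1 + u) = 0" by simp
    have "(1 / (1 + u)) *\<^sub>R (q + u *\<^sub>R (q - p)) + (u / (1 + u)) *\<^sub>R (p + (t * (1 + u) / u) *\<^sub>R d)
      = (1 / (1 + u) + u / (1 + u)) *\<^sub>R q + ((1 / (1 + u)) * u - u / (1 + u)) *\<^sub>R p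
        + ((u / (1 + u)) * (t * (1 + u) / u)) *\<^sub>R d"
      by (simp add: algebra_simps)
    then show ?thesis using h1 h2 h3 by simp
  qed
  finally show ?thesis .
qed
theorem corollary1:
  fixes A :: "real^'n^'m" and b :: "real^'m" and C :: "(real^'n) set"
    and B :: "'n set" and xbar :: "real^'n" and r :: "'n \<Rightarrow> real^'n"
  assumes full_row_rank: "rank A = CARD('m)"
    and C_open: "open C" and C_convex: "convex C"
    and B_card: "card B = CARD('m)"
    and B_indep: "\<And>c. (\<Sum>j\<in>B. c j *\<^sub>R column j A) = 0 \<Longrightarrow> \<forall>j\<in>B. c j = 0"
    and xbar_eq: "A *v xbar = b" and xbar_nonbasic: "\<forall>j. j \<notin> B \<longrightarrow> xbar $ j = 0"
    and xbar_feasible: "\<forall>i. 0 \<le> xbar $ i"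
    and r_ray: "\<forall>j. j \<notin> B \<longrightarrow> A *v r j = 0 \<and> r j $ j = 1
                   \<and> (\<forall>k. k \<notin> B \<and> k \<noteq> j \<longrightarrow> r j $ k = 0)"
    and xbar_not_cl: "xbar \<notin> closure C"
  shows "closure (convex hull (PB A b B - C)) =
         closure (convex hull (PB A b B -
           {xbar + y + d | y d.
              y \<in> convex hull (\<Union>j\<in>{j. j \<notin> B \<and>
                      0 < alpha_step C xbar (r j) \<and> alpha_step C xbar (r j) < \<infinity> \<and>
                      (beta_step C xbar (r j) = \<infinity> \<or>
                       (alpha_step C xbar (r j) < beta_step C xbar (r j) \<and>
                        beta_step C xbar (r j) < \<infinity>))}.
                    {t *\<^sub>R r j | t::real. alpha_step C xbar (r j) < ereal t \<and>
                                        ereal t < beta_step C xbar (r j)})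
            \<and> d \<in> recc (PB A b B \<inter> C)}))"
  proof -
  let ?P = "PB A b B"
  define S where "S j = {t::real. t \<ge> 0 \<and> xbar + t *\<^sub>R r j \<in> C}" for j
  have alpha_S: "alpha_step C xbar (r j) = Inf (ereal ` S j)" for j
    by (simp add: alpha_step_def S_def)
  have beta_S: "beta_step C xbar (r j) = Sup (ereal ` S j)" for j
    by (simp add: beta_step_def S_def)
  define I where "I = {j. j \<notin> B \<and>
                      0 < alpha_step C xbar (r j) \<and> alpha_step C xbar (r j) < \<infinity> \<and>
                      (beta_step C xbar (r j) = \<infinity> \<or>
                       (alpha_step C xbar (r j) < beta_step C xbar (r j) \<and>
                        beta_step C xbar (r j) < \<infinity>))}"
  define U where "U = (\<Union>j\<in>I.
                    {t *\<^sub>R r j | t::real. alpha_step C xbar (r j) < ereal t \<and>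
                                        ereal t < beta_step C xbar (r j)})"
  define T where "T = {xbar + y + d | y d. y \<in> convex hull U \<and> d \<in> recc (?P \<inter> C)}"
  have goal: "closure (convex hull (?P - C)) = closure (convex hull (?P - T))"
  proof -
    have xbarP: "xbar \<in> ?P" using xbar_eq xbar_feasible by (simp add: PB_def)
    have xbarC: "xbar \<notin> C" using xbar_not_cl closure_subset by blast
    have P_ray: "p + t *\<^sub>R r j \<in> ?P" if "p \<in> ?P" "j \<notin> B" "t \<ge> 0" for p t j
    proof -
      have "A *v (p + t *\<^sub>R r j) = b"
        using that r_ray by (simp add: PB_def matrix_vector_right_distrib matrix_vector_mult_scaleR)
      moreover have "0 \<le> (p + t *\<^sub>R r j) $ k" if "k \<notin> B" for k
      proof (cases "k = j")
        case True then show ?thesis using that \<open>p \<in> ?P\<close> \<open>t \<ge> 0\<close> r_ray \<open>j \<notin> B\<close>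
          by (simp add: PB_def)
      next
        case False then show ?thesis using that \<open>p \<in> ?P\<close> r_ray \<open>j \<notin> B\<close>
          by (simp add: PB_def)
      qed
      ultimately show ?thesis by (simp add: PB_def)
    qed
    have convP: "convex ?P"
    proof (rule convexI)
      fix x y :: "real^'n" and u v :: real
      assume "x \<in> ?P" "y \<in> ?P" "0 \<le> u" "0 \<le> v" "u + v = 1"
      then show "u *\<^sub>R x + v *\<^sub>R y \<in> ?P"
        by (simp add: PB_def matrix_vector_right_distrib matrix_vector_mult_scaleR scaleR_add_left[symmetric])
    qed
    have hU: "U \<subseteq> {y. xbar + y \<in> ?P \<inter> C}"
    proof
      fix z assume "z \<in> U"
      then obtain j t where j: "j \<in> I" and t1: "alpha_step C xbar (r j) < ereal t"
        and t2: "ereal t < beta_step C xbar (r j)" and z: "z = t *\<^sub>R r j"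
        unfolding U_def by blast
      from t1 obtain s1 where s1: "s1 \<in> S j" "s1 < t" unfolding alpha_S Inf_less_iff by auto
      from t2 obtain s2 where s2: "s2 \<in> S j" "t < s2" unfolding beta_S less_Sup_iff by auto
      define u where "u = (t - s1) / (s2 - s1)"
      have u: "0 \<le> u" "u \<le> 1" using s1 s2 by (auto simp: u_def)
      have eq: "xbar + t *\<^sub>R r j = (1 - u) *\<^sub>R (xbar + s1 *\<^sub>R r j) + u *\<^sub>R (xbar + s2 *\<^sub>R r j)"
      proof -
        have h: "u * (s2 - s1) = t - s1" using s1 s2 by (simp add: u_def)
        have "(1 - u) * s1 + u * s2 = s1 + u * (s2 - s1)" by (simp add: algebra_simps)
        then have "(1 - u) * s1 + u * s2 = t" using h by linarith
        have "(1 - u) *\<^sub>R (xbar + s1 *\<^sub>R r j) + u *\<^sub>R (xbar + s2 *\<^sub>R r j)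
            = xbar + ((1 - u) * s1 + u * s2) *\<^sub>R r j"
          by (simp add: algebra_simps)
        then show ?thesis using \<open>(1 - u) * s1 + u * s2 = t\<close> by simp
      qed
      have "xbar + t *\<^sub>R r j \<in> C"
        unfolding eq using s1 s2 u C_convex by (intro convexD) (auto simp: S_def)
      moreover have "xbar + t *\<^sub>R r j \<in> ?P"
        using P_ray[OF xbarP, of j t] j s1 by (auto simp: I_def S_def)
      ultimately show "z \<in> {y. xbar + y \<in> ?P \<inter> C}" using z by simp
    qed
    have hconv: "convex {y. xbar + y \<in> ?P \<inter> C}"
    proof (rule convexI)
      fix x y :: "real^'n" and u v :: real
      assume xy: "x \<in> {y. xbar + y \<in> ?P \<inter> C}" "y \<in> {y. xbar + y \<in> ?P \<inter> C}"
        and uv: "0 \<le> u" "0 \<le> v" "u + v = 1"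
      have eq: "xbar + (u *\<^sub>R x + v *\<^sub>R y) = u *\<^sub>R (xbar + x) + v *\<^sub>R (xbar + y)"
      proof -
        have "u *\<^sub>R (xbar + x) + v *\<^sub>R (xbar + y) = (u + v) *\<^sub>R xbar + (u *\<^sub>R x + v *\<^sub>R y)"
          by (simp add: algebra_simps)
        then show ?thesis using uv by simp
      qed
      show "u *\<^sub>R x + v *\<^sub>R y \<in> {y. xbar + y \<in> ?P \<inter> C}"
        using xy uv convexD[OF convP] convexD[OF C_convex] unfolding mem_Collect_eq eq by blast
    qed
    have hullU: "convex hull U \<subseteq> {y. xbar + y \<in> ?P \<inter> C}"
      using hU hconv by (rule hull_minimal)
    have TC: "T \<subseteq> C"
    proof
      fix z assume "z \<in> T"
      then obtain y d where z: "z = xbar + y + d" and y: "y \<in> convex hull U"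
        and d: "d \<in> recc (?P \<inter> C)" unfolding T_def by blast
      have xy: "xbar + y \<in> ?P \<inter> C" using hullU y by blast
      have dd: "\<And>q t. q \<in> ?P \<inter> C \<Longrightarrow> 0 \<le> t \<Longrightarrow> q + t *\<^sub>R d \<in> ?P \<inter> C"
        using d unfolding recc_def by blast
      from dd[OF xy zero_le_one] have "xbar + y + 1 *\<^sub>R d \<in> ?P \<inter> C" .
      then show "z \<in> C" using z by simp
    qed
    have sub1: "closure (convex hull (?P - C)) \<subseteq> closure (convex hull (?P - T))"
    proof -
      have "?P - C \<subseteq> ?P - T" using TC by blast
      then show ?thesis by (intro closure_mono hull_mono)
    qed
    define Q where "Q = closure (convex hull (?P - C))"
    have convQ: "convex Q" unfolding Q_def by (simp add: convex_closure)
    have closedQ: "closed Q" unfolding Q_def by simp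
    have PTQ: "?P - T \<subseteq> Q"
    proof
      fix x assume xPT: "x \<in> ?P - T"
      show "x \<in> Q"
      proof (rule ccontr)
        assume "x \<notin> Q"
        from separating_hyperplane_closed_point[OF convQ closedQ this]
        obtain a c where ax: "a \<bullet> x < c" and aQ: "\<forall>y\<in>Q. c < a \<bullet> y" by blast
        have hQ: "c < a \<bullet> p" if "p \<in> ?P" "p \<notin> C" for p
        proof -
          have "p \<in> ?P - C" using that by blast
          then have "p \<in> convex hull (?P - C)" by (rule hull_inc)
          then have "p \<in> Q" unfolding Q_def by (rule rev_subsetD[OF _ closure_subset])
          then show ?thesis using aQ by blast
        qed
        have xP: "x \<in> ?P" and xT: "x \<notin> T" using xPT by auto
        define g where "g j = a \<bullet> r j" for j
        define lam where "lam j = x $ j" for j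
        define \<delta> where "\<delta> = a \<bullet> xbar - c"
        have dpos: "\<delta> > 0" using hQ[OF xbarP xbarC] by (simp add: \<delta>_def inner_commute)
        have lam_nn: "lam j \<ge> 0" if "j \<notin> B" for j using xP that by (simp add: PB_def lam_def)
        have hinner: "a \<bullet> (p + (\<Sum>j\<in>{j. j \<notin> B}. w j *\<^sub>R r j)) = a \<bullet> p + (\<Sum>j\<in>{j. j \<notin> B}. w j * g j)"
          for p w by (simp add: inner_add_right inner_sum_right g_def)
        have xrep: "x = xbar + (\<Sum>j\<in>{j. j \<notin> B}. lam j *\<^sub>R r j)"
          unfolding lam_def by (rule PB_rep[OF r_ray B_indep xbar_eq xbar_nonbasic xP])
        have hx: "a \<bullet> xbar + (\<Sum>j\<in>{j. j \<notin> B}. lam j * g j) < c"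
          using ax hinner[of xbar lam] xrep by (simp add: inner_commute)
        define aa where "aa j = real_of_ereal (alpha_step C xbar (r j))" for j
        obtain e where e: "e > 0" "\<And>y. y \<in> C \<Longrightarrow> e \<le> dist y xbar"
          using xbar_not_cl unfolding closure_approachable by (meson not_le)
        have factA: "alpha_step C xbar (r j) = ereal (aa j) \<and> aa j > 0 \<and> aa j * (- g j) \<le> \<delta>
             \<and> beta_step C xbar (r j) = \<infinity> \<and> j \<in> I" if j: "j \<notin> B" "g j < 0" for j
        proof -
          have ptP: "xbar + t *\<^sub>R r j \<in> ?P" if "t \<ge> 0" for t using P_ray[OF xbarP j(1) that] .
          have ptval: "a \<bullet> (xbar + t *\<^sub>R r j) = a \<bullet> xbar + t * g j" for t
            by (simp add: inner_add_right g_def)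
          have notS: "t * (- g j) < \<delta>" if "t \<ge> 0" "t \<notin> S j" for t
          proof -
            have "xbar + t *\<^sub>R r j \<notin> C" using that by (simp add: S_def)
            from hQ[OF ptP[OF that(1)] this] show ?thesis by (simp add: ptval \<delta>_def inner_commute)
          qed
          have unb: "\<exists>t\<in>S j. t > M" for M
          proof (rule ccontr)
            assume "\<not> (\<exists>t\<in>S j. t > M)"
            then have le: "\<And>t. t \<in> S j \<Longrightarrow> t \<le> M" by auto
            define t0 where "t0 = max M 0 + \<delta> / (- g j) + 1"
            have gpos: "- g j > 0" using j by simp
            have q0: "\<delta> / (- g j) > 0" using dpos gpos by (rule divide_pos_pos)
            have m0: "max M 0 \<ge> 0" by simp
            have t0nn: "t0 \<ge> 0" unfolding t0_def using q0 m0 by linarith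
            have "t0 > M" unfolding t0_def using q0 by linarith
            then have "t0 \<notin> S j" using le[of t0] by auto
            from notS[OF t0nn this] have "t0 * (- g j) < \<delta>" .
            moreover have "t0 * (- g j) \<ge> (\<delta> / (- g j) + 1) * (- g j)"
              using gpos by (intro mult_right_mono) (auto simp: t0_def)
            moreover have "(\<delta> / (- g j) + 1) * (- g j) = \<delta> + (- g j)"
              using gpos by (simp add: field_simps)
            ultimately show False using gpos by linarith
          qed
          have "r j $ j = 1" using r_ray j(1) by blast
          then have "r j \<noteq> 0" by auto
          then have rnz: "norm (r j) > 0" by simp
          have Slow: "t \<ge> e / norm (r j)" if "t \<in> S j" for t
          proof -
            have "e \<le> dist (xbar + t *\<^sub>R r j) xbar" using e(2) that by (simp add: S_def)
            also have "\<dots> = t * norm (r j)" using that by (simp add: S_def dist_norm)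
            finally show ?thesis using rnz by (simp add: divide_simps)
          qed
          obtain t1 where t1: "t1 \<in> S j" using unb by blast
          have al1: "ereal (e / norm (r j)) \<le> alpha_step C xbar (r j)"
            unfolding alpha_S by (rule Inf_greatest) (auto simp: Slow)
          have al2: "alpha_step C xbar (r j) \<le> ereal t1"
            unfolding alpha_S using t1 by (auto intro: Inf_lower)
          have afin: "alpha_step C xbar (r j) = ereal (aa j)"
            using al1 al2 unfolding aa_def by (cases "alpha_step C xbar (r j)") auto
          have apos: "aa j > 0"
          proof -
            have "e / norm (r j) > 0" using e rnz by simp
            then show ?thesis using al1 afin by simp
          qed
          have binf: "beta_step C xbar (r j) = \<infinity>"
            unfolding beta_S
          proof (rule SUP_PInfty)
            fix n :: nat
            obtain t where "t \<in> S j" "t > real n" using unb by blast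
            then show "\<exists>i\<in>S j. ereal (real n) \<le> ereal i" by (auto intro!: bexI[of _ t])
          qed
          have bound: "aa j * (- g j) \<le> \<delta>"
          proof (rule ccontr)
            assume "\<not> aa j * (- g j) \<le> \<delta>"
            then have big: "aa j * (- g j) > \<delta>" by simp
            have gpos: "- g j > 0" using j by simp
            define s0 where "s0 = \<delta> / (- g j)"
            define t where "t = (s0 + aa j) / 2"
            have q: "s0 < aa j" using big gpos by (simp add: s0_def divide_simps mult.commute)
            have q0: "s0 > 0" unfolding s0_def using dpos gpos by (rule divide_pos_pos)
            have tnn: "t \<ge> 0" unfolding t_def using q0 apos by simp
            have tlt: "t < aa j" unfolding t_def using q by simp
            have "t \<notin> S j"
            proof
              assume "t \<in> S j"
              then have "alpha_step C xbar (r j) \<le> ereal t" unfolding alpha_S by (auto intro: Inf_lower)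
              then show False using afin tlt by simp
            qed
            from notS[OF tnn this] have "t * (- g j) < \<delta>" .
            moreover have "2 * (t * (- g j)) = \<delta> + aa j * (- g j)"
              using gpos by (simp add: t_def s0_def field_simps)
            ultimately show False using big by linarith
          qed
          have "j \<in> I" unfolding I_def using j(1) afin apos binf by simp
          then show ?thesis using afin apos bound binf by blast
        qed
                define N where "N = {j. j \<notin> B}"
        have finN: "finite N" by simp
        define Neg where "Neg = (\<Sum>j\<in>N. if g j < 0 then lam j * (- g j) else 0)"
        define Pos where "Pos = (\<Sum>j\<in>N. if g j < 0 then 0 else lam j * g j)"
        have sumlg: "(\<Sum>j\<in>N. lam j * g j) = Pos - Neg"
          unfolding Pos_def Neg_def sum_subtractf[symmetric] by (rule sum.cong) auto
        have Pos_nn: "Pos \<ge> 0" unfolding Pos_def N_def using lam_nn by (auto intro!: sum_nonneg)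
        have NP: "Neg - Pos > \<delta>" using hx sumlg unfolding N_def \<delta>_def by linarith
        have Negpos: "Neg > 0" using NP Pos_nn dpos by linarith
        define \<theta> where "\<theta> = (Neg - Pos) / Neg"
        have th0: "\<theta> > 0" using NP dpos Negpos by (simp add: \<theta>_def)
        have th1: "\<theta> \<le> 1" using Pos_nn Negpos by (simp add: \<theta>_def divide_simps)
        have thNeg: "\<theta> * Neg = Neg - Pos" using Negpos by (simp add: \<theta>_def)
        define \<mu> where "\<mu> j = (if g j < 0 then \<theta> * lam j else 0)" for j
        define \<nu> where "\<nu> j = lam j - \<mu> j" for j
        have \<nu>_nn: "\<nu> j \<ge> 0" if "j \<notin> B" for j
        proof -
          have "\<theta> * lam j \<le> 1 * lam j" using th1 lam_nn[OF that] by (intro mult_right_mono)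
          then show ?thesis using lam_nn[OF that] by (simp add: \<nu>_def \<mu>_def)
        qed
        define y where "y = (\<Sum>j\<in>N. \<mu> j *\<^sub>R r j)"
        define d where "d = (\<Sum>j\<in>N. \<nu> j *\<^sub>R r j)"
        have xyd: "x = xbar + y + d"
        proof -
          have "(\<Sum>j\<in>N. lam j *\<^sub>R r j) = (\<Sum>j\<in>N. \<mu> j *\<^sub>R r j + \<nu> j *\<^sub>R r j)"
            by (rule sum.cong) (auto simp: \<nu>_def scaleR_add_left[symmetric])
          then show ?thesis using xrep unfolding y_def d_def N_def sum.distrib by (simp add: add.assoc)
        qed
        have sum\<nu>g: "(\<Sum>j\<in>N. \<nu> j * g j) = 0"
        proof -
          have "(\<Sum>j\<in>N. \<nu> j * g j) = (\<Sum>j\<in>N. (if g j < 0 then 0 else lam j * g j)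
                   - (1 - \<theta>) * (if g j < 0 then lam j * (- g j) else 0))"
            by (rule sum.cong) (auto simp: \<nu>_def \<mu>_def algebra_simps)
          also have "\<dots> = Pos - (1 - \<theta>) * Neg"
            unfolding Pos_def Neg_def sum_subtractf sum_distrib_left ..
          also have "\<dots> = 0" using thNeg by (simp add: algebra_simps)
          finally show ?thesis .
        qed
        have xtd: "x + t *\<^sub>R d \<in> C" if "t \<ge> 0" for t
        proof (rule ccontr)
          assume nC: "x + t *\<^sub>R d \<notin> C"
          have eqd: "x + t *\<^sub>R d = x + (\<Sum>j\<in>{j. j \<notin> B}. (t * \<nu> j) *\<^sub>R r j)"
            unfolding d_def N_def scaleR_sum_right by simp
          have inP: "x + t *\<^sub>R d \<in> ?P"
            unfolding eqd using \<nu>_nn that by (intro PB_add[OF r_ray xP]) simp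
          have "a \<bullet> (x + t *\<^sub>R d) = a \<bullet> x + (\<Sum>j\<in>N. (t * \<nu> j) * g j)"
            unfolding eqd hinner N_def ..
          also have "(\<Sum>j\<in>N. (t * \<nu> j) * g j) = t * (\<Sum>j\<in>N. \<nu> j * g j)"
            by (simp add: sum_distrib_left mult.assoc)
          finally have "a \<bullet> (x + t *\<^sub>R d) = a \<bullet> x" using sum\<nu>g by simp
          with hQ[OF inP nC] ax show False by (simp add: inner_commute)
        qed
        have drecc: "d \<in> recc (?P \<inter> C)"
          unfolding recc_def
        proof (intro CollectI ballI allI impI)
          fix q t assume q: "q \<in> ?P \<inter> C" and t: "(0::real) \<le> t"
          have x0: "x \<in> C" using xtd[of 0] by simp
          have "q + t *\<^sub>R d \<in> C"
            using q by (intro open_recc[OF C_open C_convex x0 xtd _ t]) auto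
          moreover have "q + t *\<^sub>R d \<in> ?P"
          proof -
            have eqd: "q + t *\<^sub>R d = q + (\<Sum>j\<in>{j. j \<notin> B}. (t * \<nu> j) *\<^sub>R r j)"
              unfolding d_def N_def scaleR_sum_right by simp
            show ?thesis unfolding eqd using \<nu>_nn t q by (intro PB_add[OF r_ray]) auto
          qed
          ultimately show "q + t *\<^sub>R d \<in> ?P \<inter> C" by blast
        qed
        have yU: "y \<in> convex hull U"
        proof -
          define S' where "S' = {j \<in> N. g j < 0 \<and> lam j > 0}"
          have finS': "finite S'" by simp
          have S'N: "S' \<subseteq> N" by (auto simp: S'_def)
          have mu0: "\<mu> j = 0" if "j \<in> N - S'" for j
          proof -
            have "j \<notin> B" using that by (simp add: N_def)
            then have "lam j \<ge> 0" by (rule lam_nn)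
            then show ?thesis using that by (auto simp: S'_def \<mu>_def N_def)
          qed
          have yS': "y = (\<Sum>j\<in>S'. \<mu> j *\<^sub>R r j)"
            unfolding y_def using mu0 by (intro sum.mono_neutral_right[OF finN S'N]) auto
          have NegS': "Neg = (\<Sum>j\<in>S'. lam j * (- g j))"
          proof -
            have "Neg = (\<Sum>j\<in>S'. if g j < 0 then lam j * (- g j) else 0)"
              unfolding Neg_def
            proof (rule sum.mono_neutral_right[OF finN S'N], rule ballI)
              fix j assume j: "j \<in> N - S'"
              then have "j \<notin> B" by (simp add: N_def)
              then have "lam j \<ge> 0" by (rule lam_nn)
              then show "(if g j < 0 then lam j * (- g j) else 0) = 0" using j by (auto simp: S'_def)
            qed
            also have "\<dots> = (\<Sum>j\<in>S'. lam j * (- g j))" by (rule sum.cong) (auto simp: S'_def)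
            finally show ?thesis .
          qed
          define K where "K = (\<Sum>j\<in>S'. \<mu> j * (- g j))"
          have K: "K = \<theta> * Neg"
            unfolding K_def NegS' sum_distrib_left
            by (rule sum.cong) (auto simp: S'_def \<mu>_def)
          have Kd: "K > \<delta>" using K thNeg NP by simp
          have jfacts: "alpha_step C xbar (r j) = ereal (aa j) \<and> aa j > 0 \<and> aa j * (- g j) \<le> \<delta>
             \<and> beta_step C xbar (r j) = \<infinity> \<and> j \<in> I" if "j \<in> S'" for j
            using that by (intro factA) (auto simp: S'_def N_def)
          have mu_nn: "\<mu> j \<ge> 0" if "j \<in> S'" for j
            using that th0 by (auto simp: S'_def \<mu>_def)
          define \<sigma> where "\<sigma> = (\<Sum>j\<in>S'. \<mu> j / aa j)"
          have termi: "\<mu> j * (- g j) / \<delta> \<le> \<mu> j / aa j" if "j \<in> S'" for j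
          proof -
            from jfacts[OF that] have ap: "aa j > 0" and bd: "aa j * (- g j) \<le> \<delta>" by auto
            have "aa j * (- g j) / \<delta> \<le> 1" using bd dpos by (subst divide_le_eq_1_pos) auto
            moreover have "\<mu> j / aa j \<ge> 0" using mu_nn[OF that] ap by simp
            ultimately have le: "(\<mu> j / aa j) * (aa j * (- g j) / \<delta>) \<le> (\<mu> j / aa j) * 1"
              by (intro mult_left_mono)
            have eq: "(\<mu> j / aa j) * (aa j * (- g j) / \<delta>) = \<mu> j * (- g j) / \<delta>"
              using ap by (simp add: field_simps)
            from le[unfolded eq] show ?thesis by simp
          qed
          have "K / \<delta> = (\<Sum>j\<in>S'. \<mu> j * (- g j) / \<delta>)" unfolding K_def by (simp add: sum_divide_distrib)
          also have "\<dots> \<le> \<sigma>" unfolding \<sigma>_def by (rule sum_mono) (rule termi)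
          finally have "K / \<delta> \<le> \<sigma>" .
          moreover have "K / \<delta> > 1" using Kd dpos by simp
          ultimately have sig: "\<sigma> > 1" by simp
          define w where "w j = (\<mu> j / aa j) / \<sigma>" for j
          define z where "z j = (aa j * \<sigma>) *\<^sub>R r j" for j
          have "(\<Sum>j\<in>S'. w j *\<^sub>R z j) \<in> convex hull U"
          proof (rule convex_sum[OF finS' convex_convex_hull])
            have "sum w S' = \<sigma> / \<sigma>" unfolding w_def \<sigma>_def by (rule sum_divide_distrib[symmetric])
            then show "sum w S' = 1" using sig by simp
            fix j assume j: "j \<in> S'"
            from jfacts[OF j] have ap: "aa j > 0" and al: "alpha_step C xbar (r j) = ereal (aa j)"
              and be: "beta_step C xbar (r j) = \<infinity>" and jI: "j \<in> I" by auto
            show "0 \<le> w j" unfolding w_def using mu_nn[OF j] ap sig by simp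
            have "aa j < aa j * \<sigma>" using ap sig by simp
            then have c1: "alpha_step C xbar (r j) < ereal (aa j * \<sigma>) \<and> ereal (aa j * \<sigma>) < beta_step C xbar (r j)"
              using al be by simp
            have "z j \<in> {t *\<^sub>R r j | t::real. alpha_step C xbar (r j) < ereal t \<and> ereal t < beta_step C xbar (r j)}"
              unfolding z_def mem_Collect_eq by (rule exI[of _ "aa j * \<sigma>"]) (use c1 in simp)
            then have "z j \<in> U" unfolding U_def using jI by (rule UN_I[rotated])
            then show "z j \<in> convex hull U" by (rule hull_inc)
          qed
          moreover have "(\<Sum>j\<in>S'. w j *\<^sub>R z j) = y"
            unfolding yS'
          proof (rule sum.cong[OF refl])
            fix j assume j: "j \<in> S'"
            from jfacts[OF j] have ap: "aa j > 0" by auto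
            have "w j * (aa j * \<sigma>) = \<mu> j" using ap sig unfolding w_def by (simp add: field_simps)
            then show "w j *\<^sub>R z j = \<mu> j *\<^sub>R r j" by (simp add: z_def)
          qed
          ultimately show ?thesis by simp
        qed
        have "x \<in> T" unfolding T_def mem_Collect_eq
          by (rule exI[of _ y], rule exI[of _ d]) (intro conjI xyd yU drecc)
        with xT show False by blast


      qed
    qed
    have sub2: "closure (convex hull (?P - T)) \<subseteq> Q"
      proof (rule closure_minimal[OF _ closedQ])
      show "convex hull (?P - T) \<subseteq> Q" using PTQ convQ by (rule hull_minimal)
    qed
    show ?thesis using sub1 sub2 unfolding Q_def by blast
  qed
  then show ?thesis by (simp only: T_def U_def I_def)
qed

end
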